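(* Let $k$ be an algebraically closed field of characteristic $p>2$, let $X$ be the smooth projective curve over $k$ with affine equation $y^2=x^p-x$, of genus $g=(p-1)/2$, and let $G=\operatorname{Aut}_k(X)$, described below. Let $\theta:\operatorname{SL}_2(\mathbf{F}_p)\to G$ send $\sigma$ to the class of $(\sigma,1)$, and let $H=\operatorname{im}\theta$. Let $V$ be the $k[H]$-module $\operatorname{Sym}^{g-1}(k^2)$ described below. Then the $k$-linear map $$\varphi: \operatorname{res}_H\big(H^0(X,\Omega^1_{X/k})\big)\to V,\qquad \frac{x^i\,dx}{y}\mapsto u^iv^{g-i-1}\quad (i=0,\dots,g-1)$$ is an isomorphism of $k[H]$-modules.
   Context: Let $\widetilde G\subseteq \operatorname{GL}_2(\mathbf{F}_p)\times \mathbf{F}_{p^2}^\times$ be the subgroup of pairs $(\sigma,u_\sigma)$ with $\det\sigma=u_\sigma^2$; $\mathbf{F}_p^\times$ acts on $\widetilde G$ by $\lambda(\sigma,u_\sigma)=(\lambda\sigma,\lambda^{(p+1)/2}u_\sigma)$, and $G=\mathbf{F}_p^\times\backslash\widetilde G$, which equals $\operatorname{Aut}_k(X)$. The class of $(\sigma,u_\sigma)$ with $\sigma=\begin{pmatrix}a&b\\c&d\end{pmatrix}$ acts on affine coordinates of $X$ by $(x,y)\mapsto\left(\frac{ax+b}{cx+d},\,u_\sigma\frac{y}{(cx+d)^{(p+1)/2}}\right)$, and $G$ acts on $H^0(X,\Omega^1_{X/k})$ functorially (by pullback/transport of forms). The elements $x^i\,dx/y$, $i=0,\dots,g-1$, form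 a $k$-basis of $H^0(X,\Omega^1_{X/k})$. Identify $\operatorname{Sym}^{g-1}(k^2)$ with the homogeneous polynomials of degree $g-1$ in $k[u,v]$, with $\begin{pmatrix}a&b\\c&d\end{pmatrix}\in\operatorname{SL}_2(\mathbf{F}_p)$ acting by substituting $u\mapsto au+bv$, $v\mapsto cu+dv$. The kernel of $\theta$ ($\{I\}$ if $p\equiv1\bmod 4$, $\{\pm I\}$ if $p\equiv 3\bmod 4$) acts trivially on this space, so $h=\theta(\sigma)\in H$ acting as $\sigma$ gives a well-defined $k[H]$-module $V$. *)

theory Defs
  imports "HOL-Computational_Algebra.Polynomial_Factorial" "HOL-Library.Product_Plus" "HOL-Number_Theory.Cong"
begin

type_synonym 'k ratfn = "'k poly fract"

(* The function field K = k(X) = k(x)[y]/(y^2 - x^p + x):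
   a pair (f, g) stands for f + g*y. *)
type_synonym 'k fnfield = "'k ratfn \<times> 'k ratfn"

(* Rational (meromorphic) differentials on X: since Omega_{K/k} = K dx,
   a pair h stands for the differential h dx. *)
type_synonym 'k mdiff = "'k fnfield"

definition const_rf :: "'k::field \<Rightarrow> 'k ratfn" where
  "const_rf c = to_fract [:c:]"

definition xfun :: "'k::field ratfn" where
  "xfun = to_fract [:0, 1:]"

definition rf_scale :: "'k::field ratfn \<Rightarrow> 'k fnfield \<Rightarrow> 'k fnfield" where
  "rf_scale r w = (r * fst w, r * snd w)"

definition k_smul :: "'k::field \<Rightarrow> 'k mdiff \<Rightarrow> 'k mdiff" where
  "k_smul c w = rf_scale (const_rf c) w"

definition subst_poly_rf :: "'k::field poly \<Rightarrow> 'k ratfn \<Rightarrow> 'k ratfn" where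
  "subst_poly_rf q z = poly (map_poly const_rf q) z"

definition subst_rf :: "'k::field ratfn \<Rightarrow> 'k ratfn \<Rightarrow> 'k ratfn" where
  "subst_rf r z = (SOME t. \<exists>n m. m \<noteq> 0 \<and> r = Fract n m \<and>
                       t = subst_poly_rf n z / subst_poly_rf m z)"

definition deriv_rf :: "'k::field ratfn \<Rightarrow> 'k ratfn" where
  "deriv_rf r = (SOME t. \<exists>n m. m \<noteq> 0 \<and> r = Fract n m \<and>
                   t = to_fract (pderiv n * m - n * pderiv m) / to_fract (m ^ 2))"

definition moeb :: "'k::field \<Rightarrow> 'k \<Rightarrow> 'k \<Rightarrow> 'k \<Rightarrow> 'k ratfn" where
  "moeb a b c d = to_fract [:b, a:] / to_fract [:d, c:]"

(* The automorphism of X given by the class of (sigma, u), sigma = (a b; c d),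
   acting on the function field by pullback of functions:
   x |-> (ax+b)/(cx+d),  y |-> u y / (cx+d)^((p+1)/2). *)
definition aut_fn :: "nat \<Rightarrow> 'k::field \<Rightarrow> 'k \<Rightarrow> 'k \<Rightarrow> 'k \<Rightarrow> 'k \<Rightarrow> 'k fnfield \<Rightarrow> 'k fnfield" where
  "aut_fn p a b c d u w =
     (subst_rf (fst w) (moeb a b c d),
      subst_rf (snd w) (moeb a b c d) * const_rf u / to_fract [:d, c:] ^ ((p + 1) div 2))"

(* Pullback of the differential h dx:  sigma^*(h dx) = sigma^*(h) d(sigma^* x). *)
definition pullback_diff :: "nat \<Rightarrow> 'k::field \<Rightarrow> 'k \<Rightarrow> 'k \<Rightarrow> 'k \<Rightarrow> 'k \<Rightarrow> 'k mdiff \<Rightarrow> 'k mdiff" where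
  "pullback_diff p a b c d u w = rf_scale (deriv_rf (moeb a b c d)) (aut_fn p a b c d u w)"

(* the differential x^i dx / y  (note 1/y = y/(x^p - x)) *)
definition hol_basis :: "nat \<Rightarrow> nat \<Rightarrow> 'k::field mdiff" where
  "hol_basis p i = (0, xfun ^ i / (xfun ^ p - xfun))"

definition genus :: "nat \<Rightarrow> nat" where
  "genus p = (p - 1) div 2"

definition H0 :: "nat \<Rightarrow> 'k::field mdiff set" where
  "H0 p = {(\<Sum>i<genus p. k_smul (c i) (hol_basis p i)) | c. True}"

(* Homogeneous polynomials in k[u,v]: represented in ('k poly) poly,
   outer variable u, inner variable v. *)
definition sym_space :: "nat \<Rightarrow> 'k::field poly poly set" where
  "sym_space n = {P. \<forall>i j. coeff (coeff P i) j \<noteq> 0 \<longrightarrow> i + j = n}"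

definition sym_monom :: "nat \<Rightarrow> nat \<Rightarrow> 'k::field poly poly" where
  "sym_monom n i = monom (monom 1 (n - i)) i"

(* the linear form a u + b v *)
definition lin_uv :: "'k::field \<Rightarrow> 'k \<Rightarrow> 'k poly poly" where
  "lin_uv a b = [:[:0, b:], [:a:]:]"

(* action of (a b; c d): substitute u |-> a u + b v, v |-> c u + d v *)
definition sym_act :: "'k::field \<Rightarrow> 'k \<Rightarrow> 'k \<Rightarrow> 'k \<Rightarrow> 'k poly poly \<Rightarrow> 'k poly poly" where
  "sym_act a b c d P =
     poly (map_poly (\<lambda>q. poly (map_poly (\<lambda>e. [:[:e:]:]) q) (lin_uv c d)) P) (lin_uv a b)"

(* SL_2(F_p), with F_p represented by the residues 0..p-1 *)
definition SL2_Fp :: "nat \<Rightarrow> int \<Rightarrow> int \<Rightarrow> int \<Rightarrow> int \<Rightarrow> bool" where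
  "SL2_Fp p a b c d \<longleftrightarrow> a \<in> {0..<int p} \<and> b \<in> {0..<int p} \<and> c \<in> {0..<int p} \<and> d \<in> {0..<int p}
      \<and> [a * d - b * c = 1] (mod int p)"

definition alg_closed_field :: "'k::field itself \<Rightarrow> bool" where
  "alg_closed_field _ \<longleftrightarrow> (\<forall>q::'k poly. degree q > 0 \<longrightarrow> (\<exists>z. poly q z = 0))"

end

theory Submission
  imports Defs
begin

definition rhom :: "('a::comm_ring_1 \<Rightarrow> 'b::comm_ring_1) \<Rightarrow> bool" where
  "rhom f \<longleftrightarrow> f 0 = 0 \<and> f 1 = 1 \<and> (\<forall>x y. f (x + y) = f x + f y) \<and> (\<forall>x y. f (x * y) = f x * f y)"

lemma rhom_0: "rhom f \<Longrightarrow> f 0 = 0" by (simp add: rhom_def)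
lemma rhom_1: "rhom f \<Longrightarrow> f 1 = 1" by (simp add: rhom_def)
lemma rhom_add: "rhom f \<Longrightarrow> f (x + y) = f x + f y" by (simp add: rhom_def)
lemma rhom_mult: "rhom f \<Longrightarrow> f (x * y) = f x * f y" by (simp add: rhom_def)
lemma rhom_uminus: "rhom f \<Longrightarrow> f (- x) = - f x"
proof -
  assume h: "rhom f"
  have "f x + f (-x) = 0" using rhom_add[OF h, of x "-x"] rhom_0[OF h] by simp
  thus ?thesis by (simp add: eq_neg_iff_add_eq_0 add.commute)
qed
lemma rhom_diff: "rhom f \<Longrightarrow> f (x - y) = f x - f y"
  using rhom_add[of f x "-y"] rhom_uminus[of f y] by simp
lemma rhom_power: "rhom f \<Longrightarrow> f (x ^ n) = f x ^ n"
  by (induction n) (simp_all add: rhom_1 rhom_mult)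
lemma rhom_sum: "rhom f \<Longrightarrow> f (sum h A) = (\<Sum>a\<in>A. f (h a))"
  by (induction A rule: infinite_finite_induct) (simp_all add: rhom_0 rhom_add)
lemma rhom_comp: "rhom f \<Longrightarrow> rhom g \<Longrightarrow> rhom (\<lambda>x. g (f x))"
  by (simp add: rhom_def)

lemma map_poly_add_hom:
  assumes "f 0 = 0" "\<And>x y. f (x + y) = f x + f y"
  shows "map_poly f (p + q) = map_poly f p + map_poly f q"
  by (intro poly_eqI) (simp add: coeff_map_poly assms)

lemma map_poly_mult_hom:
  assumes "rhom f"
  shows "map_poly f (p * q) = map_poly f p * map_poly f q"
proof (induction p)
  case 0 then show ?case by (simp add: rhom_0[OF assms])
next
  case (pCons a p)
  have "map_poly f (pCons a p * q) = map_poly f (smult a q + pCons 0 (p * q))"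
    by simp
  also have "\<dots> = smult (f a) (map_poly f q) + pCons 0 (map_poly f p * map_poly f q)"
    by (simp add: map_poly_add_hom rhom_0[OF assms] rhom_add[OF assms] map_poly_smult
          rhom_mult[OF assms] map_poly_pCons pCons)
  also have "\<dots> = map_poly f (pCons a p) * map_poly f q"
    by (simp add: map_poly_pCons rhom_0[OF assms])
  finally show ?case .
qed

lemma rhom_map_poly: "rhom f \<Longrightarrow> rhom (map_poly f)"
  unfolding rhom_def[of "map_poly f"]
  by (auto simp: map_poly_mult_hom map_poly_add_hom rhom_0 rhom_1 rhom_add one_pCons map_poly_pCons)

lemma rhom_poly: "rhom (\<lambda>q. poly q z)"
  by (simp add: rhom_def poly_mult)

lemma rhom_const: "rhom (\<lambda>e. [:e:])"
  by (simp add: rhom_def)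

lemma rhom_to_fract: "rhom to_fract"
  by (simp add: rhom_def)


section \<open>Homogeneous polynomials\<close>

lemma sym_spaceI: "(\<And>i j. coeff (coeff P i) j \<noteq> 0 \<Longrightarrow> i + j = n) \<Longrightarrow> P \<in> sym_space n"
  by (auto simp: sym_space_def)

lemma sym_spaceD: "P \<in> sym_space n \<Longrightarrow> coeff (coeff P i) j \<noteq> 0 \<Longrightarrow> i + j = n"
  by (auto simp: sym_space_def)

lemma sym_space_add: assumes "P \<in> sym_space n" "Q \<in> sym_space n" shows "P + Q \<in> sym_space n"
proof (rule sym_spaceI)
  fix i j assume h: "coeff (coeff (P+Q) i) j \<noteq> 0"
  then have "coeff (coeff P i) j \<noteq> 0 \<or> coeff (coeff Q i) j \<noteq> 0" by auto
  then show "i+j=n" using assms by (auto dest: sym_spaceD)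
qed

lemma sym_space_0: "0 \<in> sym_space n"
  by (rule sym_spaceI) simp

lemma sym_space_sum: "(\<And>a. a \<in> A \<Longrightarrow> f a \<in> sym_space n) \<Longrightarrow> sum f A \<in> sym_space n"
  by (induction A rule: infinite_finite_induct) (auto intro: sym_space_add sym_space_0)

lemma sym_space_mult:
  assumes P: "P \<in> sym_space n" and Q: "Q \<in> sym_space m"
  shows "P * Q \<in> sym_space (n + m)"
proof (rule sym_spaceI)
  fix i j assume nz: "coeff (coeff (P * Q) i) j \<noteq> 0"
  have "coeff (coeff (P * Q) i) j = (\<Sum>k\<le>i. \<Sum>l\<le>j. coeff (coeff P k) l * coeff (coeff Q (i - k)) (j - l))"
    by (simp add: coeff_mult coeff_sum)
  with nz obtain k l where kl: "k \<le> i" "l \<le> j"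
     "coeff (coeff P k) l * coeff (coeff Q (i - k)) (j - l) \<noteq> 0"
    by (metis (no_types, lifting) atMost_iff sum.neutral)
  hence "k + l = n" "(i - k) + (j - l) = m"
    using sym_spaceD[OF P] sym_spaceD[OF Q] by auto
  with kl show "i + j = n + m" by linarith
qed

lemma sym_space_1: "1 \<in> sym_space 0"
  by (rule sym_spaceI) (auto simp: coeff_1 of_bool_def split: if_splits)

lemma sym_space_power: "P \<in> sym_space n \<Longrightarrow> P ^ k \<in> sym_space (k * n)"
  by (induction k) (auto simp: sym_space_1 dest: sym_space_mult)

lemma sym_space_const: "[:[:c:]:] \<in> sym_space 0"
  by (rule sym_spaceI) (auto simp: coeff_pCons split: nat.splits)

lemma sym_space_lin: "lin_uv a b \<in> sym_space 1"
  by (rule sym_spaceI) (auto simp: lin_uv_def coeff_pCons split: nat.splits)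

lemma sym_space_monom: "i \<le> n \<Longrightarrow> sym_monom n i \<in> sym_space n"
  by (rule sym_spaceI) (auto simp: sym_monom_def coeff_monom split: if_splits)

lemma sym_space_smult: "P \<in> sym_space n \<Longrightarrow> smult [:c:] P \<in> sym_space n"
  by (rule sym_spaceI) (auto dest: sym_spaceD)

definition ev :: "'k::field poly poly \<Rightarrow> 'k poly" where
  "ev P = map_poly (\<lambda>q. poly q 1) P"

lemma rhom_ev: "rhom ev"
  unfolding ev_def by (intro rhom_map_poly rhom_poly)

lemma coeff_ev: "coeff (ev P) i = poly (coeff P i) 1"
  by (simp add: ev_def coeff_map_poly)

lemma single_coeff_poly:
  fixes q :: "'a::comm_ring_1 poly"
  assumes "\<And>j. coeff q j \<noteq> 0 \<Longrightarrow> j = m"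
  shows "q = monom (poly q 1) m"
proof -
  have q: "q = monom (coeff q m) m"
    by (rule poly_eqI) (use assms in \<open>auto simp: coeff_monom\<close>)
  have "poly (monom (coeff q m) m) 1 = coeff q m" by (simp add: poly_monom)
  hence "poly q 1 = coeff q m" using q by metis
  with q show ?thesis by simp
qed

lemma sym_space_coeff:
  assumes "P \<in> sym_space n"
  shows "coeff P i = (if i \<le> n then monom (coeff (ev P) i) (n - i) else 0)"
proof (cases "i \<le> n")
  case True
  have "coeff P i = monom (poly (coeff P i) 1) (n - i)"
    by (rule single_coeff_poly) (metis add_diff_cancel_left' sym_spaceD[OF assms])
  with True show ?thesis by (simp add: coeff_ev)
next
  case False
  have "coeff P i = 0"
    by (rule poly_eqI) (use sym_spaceD[OF assms, of i] False in auto)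
  with False show ?thesis by simp
qed

lemma ev_inj:
  assumes "P \<in> sym_space n" "Q \<in> sym_space n" "ev P = ev Q"
  shows "P = Q"
  by (rule poly_eqI) (simp add: sym_space_coeff[OF assms(1)] sym_space_coeff[OF assms(2)] assms(3))

lemma ev_smult_monom: "ev (smult [:c:] (sym_monom n j)) = monom c j"
  by (simp add: ev_def sym_monom_def smult_monom map_poly_monom poly_monom)

lemma rhom_C: "rhom (\<lambda>e::'k::field. [:[:e:]:])"
  by (simp add: rhom_def pCons_one)

lemma sym_act_alt: "sym_act a b c d P =
  poly (map_poly (\<lambda>q. poly (map_poly (\<lambda>e. [:[:e:]:]) q) (lin_uv c d)) P) (lin_uv a b)"
  by (simp add: sym_act_def)

lemma rhom_F: "rhom (\<lambda>q::'k::field poly. poly (map_poly (\<lambda>e. [:[:e:]:]) q) (lin_uv c d))"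
  using rhom_comp[OF rhom_map_poly[OF rhom_C] rhom_poly[of "lin_uv c d"]] by simp

lemma rhom_sym_act: "rhom (sym_act a b c d :: 'k::field poly poly \<Rightarrow> _)"
  unfolding sym_act_def
  using rhom_comp[OF rhom_map_poly[OF rhom_F] rhom_poly[of "lin_uv a b"]] by simp

lemma sym_act_smult_monom:
  "sym_act a b c d (smult [:e:] (sym_monom n i)) = [:[:e:]:] * lin_uv a b ^ i * lin_uv c d ^ (n - i)"
  by (simp add: sym_act_def sym_monom_def smult_monom map_poly_monom poly_monom mult_ac)

lemma ev_const: "ev [:[:e:]:] = [:e:]"
  by (simp add: ev_def map_poly_pCons)

lemma ev_lin: "ev (lin_uv a b) = [:b, a:]"
  by (simp add: ev_def lin_uv_def map_poly_pCons)


section \<open>Characteristic p\<close>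

lemma frob_add:
  fixes x y :: "'a::comm_ring_1"
  assumes p: "prime p" and ch: "CHAR('a) = p"
  shows "(x + y) ^ p = x ^ p + y ^ p"
proof -
  let ?t = "\<lambda>k. of_nat (p choose k) * x ^ k * y ^ (p - k) :: 'a"
  have p0: "p \<noteq> 0" using p by auto
  have "(x + y) ^ p = (\<Sum>k\<le>p. ?t k)" by (rule binomial_ring)
  also have "\<dots> = (\<Sum>k\<in>{0, p}. ?t k)"
  proof (rule sum.mono_neutral_right)
    show "\<forall>k\<in>{..p} - {0, p}. ?t k = 0"
    proof
      fix k assume k: "k \<in> {..p} - {0, p}"
      hence "p dvd (p choose k)" using dvd_choose_prime[of k p] p0 p by auto
      hence "of_nat (p choose k) = (0::'a)" using ch by (simp add: of_nat_eq_0_iff_char_dvd)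
      thus "?t k = 0" by simp
    qed
  qed auto
  also have "\<dots> = x ^ p + y ^ p" using p0 by simp
  finally show ?thesis .
qed

lemma frob_of_nat:
  assumes p: "prime p" and ch: "CHAR('a::comm_ring_1) = p"
  shows "(of_nat n :: 'a) ^ p = of_nat n"
proof (induction n)
  case 0 then show ?case using prime_gt_0_nat[OF p] by (simp add: power_0_left)
next
  case (Suc n)
  have "(of_nat (Suc n) :: 'a) ^ p = (1 + of_nat n) ^ p" by simp
  also have "\<dots> = 1 + of_nat n" using frob_add[OF p ch] Suc by simp
  finally show ?case by simp
qed

lemma frob_of_int:
  assumes p: "prime p" and ch: "CHAR('a::comm_ring_1) = p" and a: "a \<ge> 0"
  shows "(of_int a :: 'a) ^ p = of_int a"
proof -
  have "(of_int a :: 'a) = of_nat (nat a)" using a by simp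
  thus ?thesis using frob_of_nat[OF p ch] by simp
qed

lemma lin_poly: "[:b, a:] = [:b:] + monom a 1"
  by (simp add: monom_Suc monom_0)

lemma frob_lin:
  fixes a b :: "'k::field"
  assumes p: "prime p" and ch: "CHAR('k) = p" and "a ^ p = a" "b ^ p = b"
  shows "[:b, a:] ^ p = [:b:] + monom a p"
proof -
  have chp: "CHAR('k poly) = p" using ch by simp
  have "[:b, a:] ^ p = [:b:] ^ p + monom a 1 ^ p"
    unfolding lin_poly by (rule frob_add[OF p chp])
  also have "[:b:] ^ p = [:b ^ p:]"
    using rhom_power[OF rhom_const] by metis
  also have "monom a 1 ^ p = monom (a ^ p) p" by (simp add: monom_power)
  finally show ?thesis using assms by simp
qed

definition Mp :: "nat \<Rightarrow> 'k::field poly" where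
  "Mp p = monom 1 p - monom 1 1"

lemma key_identity:
  fixes a b c d :: "'k::field"
  assumes p: "prime p" and ch: "CHAR('k) = p"
    and fr: "a ^ p = a" "b ^ p = b" "c ^ p = c" "d ^ p = d"
    and det: "a * d - b * c = 1"
  shows "[:b, a:] ^ p * [:d, c:] - [:b, a:] * [:d, c:] ^ p = Mp p"
proof -
  have p1: "p \<ge> 2" using p by (simp add: prime_ge_2_nat)
  have "[:b, a:] ^ p * [:d, c:] - [:b, a:] * [:d, c:] ^ p =
        ([:b:] + monom a p) * ([:d:] + monom c 1) - ([:b:] + monom a 1) * ([:d:] + monom c p)"
    using frob_lin[OF p ch fr(1,2)] frob_lin[OF p ch fr(3,4)] lin_poly by metis
  also have "\<dots> = monom (a * d - b * c) p - monom (a * d - b * c) 1"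
    by (simp add: algebra_simps monom_0[symmetric] mult_monom diff_monom[symmetric])
  finally show ?thesis using det by (simp add: Mp_def)
qed


section \<open>Rational functions\<close>

lemma rhom_const_rf: "rhom (const_rf :: 'k::field \<Rightarrow> _)"
  unfolding const_rf_def using rhom_comp[OF rhom_const rhom_to_fract] by simp

lemma rhom_subst: "rhom (\<lambda>q. subst_poly_rf q z)"
  unfolding subst_poly_rf_def using rhom_comp[OF rhom_map_poly[OF rhom_const_rf] rhom_poly[of z]] by simp

lemma subst_monom: "subst_poly_rf (monom c i) z = const_rf c * z ^ i"
  by (simp add: subst_poly_rf_def map_poly_monom rhom_0[OF rhom_const_rf] poly_monom)

lemma subst_const: "subst_poly_rf [:c:] z = const_rf c"
  using subst_monom[of c 0 z] by (simp add: monom_0)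

lemma const_rf_eq_0: "const_rf c = 0 \<longleftrightarrow> c = 0"
  by (simp add: const_rf_def)

lemma subst_nonvanish:
  fixes z :: "'k::field ratfn"
  assumes ac: "alg_closed_field TYPE('k)" and nc: "\<And>r. z \<noteq> const_rf r"
  shows "q \<noteq> 0 \<Longrightarrow> subst_poly_rf q z \<noteq> 0"
proof (induction "degree q" arbitrary: q rule: less_induct)
  case less
  show ?case
  proof (cases "degree q = 0")
    case True
    then obtain e where q: "q = [:e:]" using degree_0_id by metis
    with less.prems have "e \<noteq> 0" by auto
    thus ?thesis by (simp add: q subst_const const_rf_eq_0)
  next
    case False
    then obtain r where "poly q r = 0" using ac by (auto simp: alg_closed_field_def)
    then obtain q' where q: "q = [:-r, 1:] * q'" by (auto simp: poly_eq_0_iff_dvd dvd_def)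
    with less.prems have q0: "q' \<noteq> 0" by auto
    have d1: "degree ([:-r, 1:] * q') = degree [:-r, 1:] + degree q'"
      using q0 by (intro degree_mult_eq) auto
    have d2: "degree [:-r, (1::'k):] = 1" by simp
    have dq: "degree q = Suc (degree q')" using d1 d2 q by (metis plus_1_eq_Suc)
    have "subst_poly_rf q' z \<noteq> 0" using less.hyps[of q'] dq q0 by simp
    moreover have "subst_poly_rf [:-r, 1:] z = z - const_rf r"
      by (simp add: subst_poly_rf_def map_poly_pCons rhom_0[OF rhom_const_rf] rhom_1[OF rhom_const_rf]
            rhom_uminus[OF rhom_const_rf])
    moreover have "z - const_rf r \<noteq> 0" using nc[of r] by simp
    ultimately show ?thesis unfolding q rhom_mult[OF rhom_subst] by simp
  qed
qed

lemma subst_rf_Fract: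
  fixes z :: "'k::field ratfn"
  assumes nv: "\<And>q. q \<noteq> 0 \<Longrightarrow> subst_poly_rf q z \<noteq> 0" and M: "M \<noteq> 0"
  shows "subst_rf (Fract N M) z = subst_poly_rf N z / subst_poly_rf M z"
  unfolding subst_rf_def
proof (rule someI2_ex)
  show "\<exists>t n m. m \<noteq> 0 \<and> Fract N M = Fract n m \<and> t = subst_poly_rf n z / subst_poly_rf m z"
    using M by blast
next
  fix t assume "\<exists>n m. m \<noteq> 0 \<and> Fract N M = Fract n m \<and> t = subst_poly_rf n z / subst_poly_rf m z"
  then obtain n m where h: "m \<noteq> 0" "Fract N M = Fract n m" "t = subst_poly_rf n z / subst_poly_rf m z"
    by blast
  have "N * m = n * M" using h(1,2) M by (simp add: eq_fract)
  hence "subst_poly_rf N z * subst_poly_rf m z = subst_poly_rf n z * subst_poly_rf M z"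
    by (metis rhom_mult[OF rhom_subst])
  thus "t = subst_poly_rf N z / subst_poly_rf M z"
    using h(3) nv[OF h(1)] nv[OF M] by (simp add: frac_eq_eq)
qed

lemma deriv_rf_Fract:
  fixes N M :: "'k::field poly"
  assumes M: "M \<noteq> 0"
  shows "deriv_rf (Fract N M) = to_fract (pderiv N * M - N * pderiv M) / to_fract (M ^ 2)"
  unfolding deriv_rf_def
proof (rule someI2_ex)
  show "\<exists>t n m. m \<noteq> 0 \<and> Fract N M = Fract n m \<and> t = to_fract (pderiv n * m - n * pderiv m) / to_fract (m ^ 2)"
    using M by blast
next
  fix t assume "\<exists>n m. m \<noteq> 0 \<and> Fract N M = Fract n m \<and> t = to_fract (pderiv n * m - n * pderiv m) / to_fract (m ^ 2)"
  then obtain n m where h: "m \<noteq> 0" "Fract N M = Fract n m" "t = to_fract (pderiv n * m - n * pderiv m) / to_fract (m ^ 2)"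
    by blast
  have e1: "n * M = N * m" using h(1,2) M by (simp add: eq_fract)
  have e2: "pderiv n * M + n * pderiv M = pderiv N * m + N * pderiv m"
    using arg_cong[OF e1, of pderiv] by (simp add: pderiv_mult algebra_simps)
  have "(pderiv n * m - n * pderiv m) * M ^ 2 - (pderiv N * M - N * pderiv M) * m ^ 2
        = m * M * ((pderiv n * M + n * pderiv M) - (pderiv N * m + N * pderiv m))
          - (n * M - N * m) * (pderiv m * M + m * pderiv M)"
    by (simp add: algebra_simps power2_eq_square)
  also have "\<dots> = 0" using e1 e2 by simp
  finally have "(pderiv n * m - n * pderiv m) * M ^ 2 = (pderiv N * M - N * pderiv M) * m ^ 2"
    by simp
  hence "to_fract (pderiv n * m - n * pderiv m) * to_fract (M ^ 2) = to_fract (pderiv N * M - N * pderiv M) * to_fract (m ^ 2)"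
    by (metis to_fract_mult)
  thus "t = to_fract (pderiv N * M - N * pderiv M) / to_fract (M ^ 2)"
    using h(1,3) M by (simp add: frac_eq_eq del: to_fract_mult)
qed


lemma field_comp:
  fixes A L TM :: "'f::field"
  assumes L: "L \<noteq> 0" and TM: "TM \<noteq> 0" and TMe: "TM = A ^ p * L - A * L ^ p"
    and pe: "p + 1 = 2 + (g + 1) + n" and gi: "\<And>i. i < g \<Longrightarrow> i \<le> n"
  shows "1 / L ^ 2 * ((\<Sum>i<g. k i * (A / L) ^ i) / ((A / L) ^ p - A / L) * 1 / L ^ (g + 1))
       = (\<Sum>i<g. k i * A ^ i * L ^ (n - i)) / TM"
proof -
  have S: "(\<Sum>i<g. k i * (A / L) ^ i) * L ^ n = (\<Sum>i<g. k i * A ^ i * L ^ (n - i))"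
    unfolding sum_distrib_right
  proof (rule sum.cong[OF refl])
    fix i assume "i \<in> {..<g}"
    hence "i \<le> n" using gi by auto
    hence "L ^ n = L ^ i * L ^ (n - i)" by (simp add: power_add[symmetric])
    thus "k i * (A / L) ^ i * L ^ n = k i * A ^ i * L ^ (n - i)"
      using L by (simp add: power_divide field_simps)
  qed
  have D: "(A / L) ^ p - A / L = TM / L ^ (p + 1)"
    using L by (simp add: TMe power_divide field_simps)
  have P: "L ^ (p + 1) = L ^ 2 * L ^ (g + 1) * L ^ n"
    by (simp only: pe power_add)
  show ?thesis
  proof -
    have "p = g + (n + 2)" using pe by simp
    hence P2: "L ^ p = L ^ g * (L ^ n * L\<^sup>2)" by (simp add: power_add power2_eq_square)
    show ?thesis unfolding D S[symmetric] using L TM by (simp add: P P2 field_simps)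
  qed
qed


definition Wd :: "nat \<Rightarrow> (nat \<Rightarrow> 'k::field) \<Rightarrow> 'k mdiff" where
  "Wd p cc = (\<Sum>i<genus p. k_smul (cc i) (hol_basis p i))"

definition Npoly :: "nat \<Rightarrow> (nat \<Rightarrow> 'k::field) \<Rightarrow> 'k poly" where
  "Npoly g cc = (\<Sum>i<g. monom (cc i) i)"

definition N2 :: "nat \<Rightarrow> 'k::field \<Rightarrow> 'k \<Rightarrow> 'k \<Rightarrow> 'k \<Rightarrow> (nat \<Rightarrow> 'k) \<Rightarrow> 'k poly" where
  "N2 g a b c d cc = (\<Sum>i<g. [:cc i:] * [:b, a:] ^ i * [:d, c:] ^ (g - 1 - i))"

lemma xfun_power: "xfun ^ i = to_fract (monom 1 i)"
  by (simp add: xfun_def rhom_power[OF rhom_to_fract, symmetric] monom_altdef)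

lemma Wd_eq: "Wd p cc = (0, to_fract (Npoly (genus p) cc) / to_fract (Mp p))"
proof -
  have XM: "xfun ^ p - xfun = to_fract (Mp p :: 'a::field poly)"
    by (simp add: Mp_def xfun_power[symmetric])
  have t: "const_rf (cc i) * xfun ^ i / (xfun ^ p - xfun) = to_fract (monom (cc i) i) / to_fract (Mp p)" for i
  proof -
    have "const_rf (cc i) * xfun ^ i = to_fract ([:cc i:] * monom 1 i)"
      by (simp only: const_rf_def xfun_power to_fract_mult)
    also have "[:cc i:] * monom 1 i = monom (cc i) i"
      by (simp add: monom_0[symmetric] mult_monom)
    finally show ?thesis by (simp add: XM[symmetric])
  qed
  show ?thesis
    by (rule prod_eqI) (simp_all add: Wd_def Npoly_def fst_sum snd_sum k_smul_def rf_scale_def hol_basis_def t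
        sum_divide_distrib)
qed

lemma det_L: "(a::'k::field) * d - b * c = 1 \<Longrightarrow> [:d, c:] \<noteq> 0"
  by auto

lemma moeb_nonconst:
  fixes a b c d :: "'k::field"
  assumes det: "a * d - b * c = 1"
  shows "moeb a b c d \<noteq> const_rf r"
proof
  assume h: "moeb a b c d = const_rf r"
  have L: "to_fract [:d, c:] \<noteq> 0" using det_L[OF det] by simp
  have "to_fract [:b, a:] = to_fract ([:r:] * [:d, c:])"
    using h L by (simp add: moeb_def const_rf_def field_simps del: mult_pCons_left mult_pCons_right)
  hence "[:b, a:] = [:r * d, r * c:]" by simp
  hence "b = r * d" "a = r * c" by auto
  with det show False by (simp add: algebra_simps)
qed


lemma Mp_nonzero: "p \<ge> 2 \<Longrightarrow> (Mp p :: 'k::field poly) \<noteq> 0"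
proof
  assume "p \<ge> 2" "Mp p = (0::'k poly)"
  hence "coeff (Mp p :: 'k poly) p = 0" by simp
  with \<open>p \<ge> 2\<close> show False by (simp add: Mp_def coeff_monom)
qed

lemma degree_N2: "degree (N2 g a b c d cc) \<le> g - 1"
  unfolding N2_def
proof (rule degree_sum_le)
  fix i assume i: "i \<in> {..<g}"
  have "degree ([:cc i:] * [:b, a:] ^ i * [:d, c:] ^ (g - 1 - i))
        \<le> degree ([:cc i:] * [:b, a:] ^ i) + degree ([:d, c:] ^ (g - 1 - i))"
    by (rule degree_mult_le)
  also have "\<dots> \<le> (degree [:cc i:] + degree ([:b, a:] ^ i)) + degree ([:d, c:] ^ (g - 1 - i))"
    using degree_mult_le by (intro add_right_mono)
  also have "\<dots> \<le> (0 + i * 1) + (g - 1 - i) * 1"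
    by (intro add_mono degree_power_le[THEN order_trans]) (auto intro: mult_mono)
  also have "\<dots> = g - 1" using i by auto
  finally show "degree ([:cc i:] * [:b, a:] ^ i * [:d, c:] ^ (g - 1 - i)) \<le> g - 1" .
qed (simp)

lemma Npoly_coeff:
  assumes "degree q < g"
  shows "Npoly g (\<lambda>j. coeff q j) = q"
proof (rule poly_eqI)
  fix j
  show "coeff (Npoly g (coeff q)) j = coeff q j"
  proof (cases "j < g")
    case True then show ?thesis by (simp add: Npoly_def coeff_sum coeff_monom)
  next
    case False
    hence "coeff q j = 0" using assms by (intro coeff_eq_0) auto
    with False show ?thesis by (simp add: Npoly_def coeff_sum coeff_monom)
  qed
qed


lemma pullback_Wd:
  fixes a b c d :: "'k::field"
  assumes ac: "alg_closed_field TYPE('k)" and p: "prime p" and p2: "p > 2" and ch: "CHAR('k) = p"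
    and fr: "a ^ p = a" "b ^ p = b" "c ^ p = c" "d ^ p = d"
    and det: "a * d - b * c = 1"
  shows "pullback_diff p a b c d 1 (Wd p cc) = Wd p (\<lambda>j. coeff (N2 (genus p) a b c d cc) j)"
proof -
  define g where "g = genus p"
  have odd: "odd p" using prime_odd_nat[OF p p2] .
  from odd obtain k where pk: "p = 2 * k + 1" by (auto elim: oddE)
  have gk: "g = k" by (simp add: g_def genus_def pk)
  have g3: "g \<ge> 1" using p2 pk gk by simp
  have g1: "p + 1 = 2 + (g + 1) + (g - 1)" using g3 pk gk by simp
  have g2: "(p + 1) div 2 = g + 1" using pk gk by simp
  define A where "A = to_fract [:b, a:]"
  define L where "L = to_fract [:d, c:]"
  define z where "z = moeb a b c d"
  have L0: "L \<noteq> 0" using det_L[OF det] by (simp add: L_def)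
  have zA: "z = A / L" by (simp add: z_def moeb_def A_def L_def)
  have nv: "\<And>q. q \<noteq> 0 \<Longrightarrow> subst_poly_rf q z \<noteq> 0"
    unfolding z_def by (rule subst_nonvanish[OF ac moeb_nonconst[OF det]])
  have M0: "Mp p \<noteq> (0 :: 'k poly)" using p2 by (intro Mp_nonzero) auto
  have s0: "subst_rf 0 z = 0"
    using subst_rf_Fract[OF nv, of 1 0] by (simp add: Zero_fract_def[symmetric] rhom_0[OF rhom_subst])
  have s1: "subst_rf (to_fract (Npoly g cc) / to_fract (Mp p)) z
            = subst_poly_rf (Npoly g cc) z / subst_poly_rf (Mp p) z"
    using subst_rf_Fract[OF nv M0] by (simp add: Fract_conv_to_fract)
  have sN: "subst_poly_rf (Npoly g cc) z = (\<Sum>i<g. const_rf (cc i) * z ^ i)"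
    by (simp add: Npoly_def rhom_sum[OF rhom_subst] subst_monom)
  have sM: "subst_poly_rf (Mp p) z = z ^ p - z"
    by (simp add: Mp_def rhom_diff[OF rhom_subst] subst_monom rhom_1[OF rhom_const_rf])
  have der: "deriv_rf z = 1 / L ^ 2"
  proof -
    have zF: "z = Fract [:b, a:] [:d, c:]" by (simp add: z_def moeb_def Fract_conv_to_fract)
    have "deriv_rf z = to_fract (pderiv [:b, a:] * [:d, c:] - [:b, a:] * pderiv [:d, c:]) / to_fract ([:d, c:] ^ 2)"
      by (simp only: zF deriv_rf_Fract[OF det_L[OF det]])
    also have "pderiv [:b, a:] * [:d, c:] - [:b, a:] * pderiv [:d, c:] = [:a * d - b * c:]"
      by (simp add: pderiv_pCons algebra_simps)
    finally show ?thesis using det by (simp add: L_def rhom_power[OF rhom_to_fract] pCons_one)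
  qed
  have TM: "to_fract (Mp p) = A ^ p * L - A * L ^ p"
    by (simp only: key_identity[OF p ch fr det, symmetric] A_def L_def to_fract_diff to_fract_mult
          rhom_power[OF rhom_to_fract])
  have TM0: "to_fract (Mp p :: 'k poly) \<noteq> 0" using M0 by simp
  have TN2: "to_fract (N2 g a b c d cc) = (\<Sum>i<g. const_rf (cc i) * A ^ i * L ^ (g - 1 - i))"
    by (simp only: N2_def A_def L_def const_rf_def rhom_power[OF rhom_to_fract] to_fract_sum to_fract_mult)
  have FC: "1 / L ^ 2 * ((\<Sum>i<g. const_rf (cc i) * (A / L) ^ i) / ((A / L) ^ p - A / L) * 1 / L ^ (g + 1))
       = (\<Sum>i<g. const_rf (cc i) * A ^ i * L ^ (g - 1 - i)) / to_fract (Mp p)"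
    by (rule field_comp[OF L0 TM0 TM g1]) auto
  have N2d: "Npoly g (\<lambda>j. coeff (N2 g a b c d cc) j) = N2 g a b c d cc"
    using degree_N2[of g a b c d cc] g3 by (intro Npoly_coeff) auto
  show ?thesis
    unfolding Wd_eq[of p] g_def[symmetric] N2d
    unfolding pullback_diff_def aut_fn_def z_def[symmetric] fst_conv snd_conv s1 s0 sN sM der g2
    using FC by (simp add: rf_scale_def zA TN2 L_def rhom_1[OF rhom_const_rf])
qed


definition Sd :: "nat \<Rightarrow> (nat \<Rightarrow> 'k::field) \<Rightarrow> 'k poly poly" where
  "Sd g cc = (\<Sum>i<g. smult [:cc i:] (sym_monom (g - 1) i))"

lemma Sd_coeff: "coeff (Sd g cc) i = (if i < g then monom (cc i) (g - 1 - i) else 0)"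
  by (simp add: Sd_def coeff_sum sym_monom_def smult_monom coeff_monom monom_0[symmetric] mult_monom)

lemma Sd_sym: "Sd g cc \<in> sym_space (g - 1)"
  unfolding Sd_def by (intro sym_space_sum sym_space_smult sym_space_monom) auto

lemma ev_Sd: "ev (Sd g cc) = Npoly g cc"
  by (simp add: Sd_def Npoly_def rhom_sum[OF rhom_ev] ev_smult_monom)

lemma sym_space_eq: "P \<in> sym_space n \<Longrightarrow> n = m \<Longrightarrow> P \<in> sym_space m" by simp

lemma sym_act_Sd: "sym_act a b c d (Sd g cc)
   = (\<Sum>i<g. [:[:cc i:]:] * lin_uv a b ^ i * lin_uv c d ^ (g - 1 - i))"
  by (simp add: Sd_def rhom_sum[OF rhom_sym_act] sym_act_smult_monom)

lemma sym_act_Sd_sym: "sym_act a b c d (Sd g cc) \<in> sym_space (g - 1)"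
  unfolding sym_act_Sd
proof (intro sym_space_sum)
  fix i assume i: "i \<in> {..<g}"
  have "[:[:cc i:]:] * lin_uv a b ^ i * lin_uv c d ^ (g - 1 - i) \<in> sym_space (0 + i * 1 + (g - 1 - i) * 1)"
    by (intro sym_space_mult sym_space_const sym_space_power sym_space_lin)
  thus "[:[:cc i:]:] * lin_uv a b ^ i * lin_uv c d ^ (g - 1 - i) \<in> sym_space (g - 1)"
    by (rule sym_space_eq) (use i in auto)
qed

lemma ev_sym_act_Sd: "ev (sym_act a b c d (Sd g cc)) = N2 g a b c d cc"
  unfolding sym_act_Sd N2_def rhom_sum[OF rhom_ev] rhom_mult[OF rhom_ev] rhom_power[OF rhom_ev]
       ev_const ev_lin ..


theorem proposition2p2:
  fixes p :: nat
    and \<phi> :: "'k::field mdiff \<Rightarrow> 'k poly poly"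
  assumes "prime p" and "p > 2"
    and "CHAR('k) = p"
    and "alg_closed_field TYPE('k)"
    and phi: "\<forall>c :: nat \<Rightarrow> 'k.
               \<phi> (\<Sum>i<genus p. k_smul (c i) (hol_basis p i))
                 = (\<Sum>i<genus p. smult [:c i:] (sym_monom (genus p - 1) i))"
  shows "bij_betw \<phi> (H0 p) (sym_space (genus p - 1)) \<and>
         (\<forall>a b c d. SL2_Fp p a b c d \<longrightarrow>
            (\<forall>w \<in> H0 p.
               pullback_diff p (of_int a) (of_int b) (of_int c) (of_int d) 1 w \<in> H0 p \<and>
               \<phi> (pullback_diff p (of_int a) (of_int b) (of_int c) (of_int d) 1 w)
                 = sym_act (of_int a) (of_int b) (of_int c) (of_int d) (\<phi> w)))"
proof -
  note p = assms(1) and p2 = assms(2) and ch = assms(3) and ac = assms(4)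
  define g where "g = genus p"
  have g1: "g \<ge> 1" using p2 by (simp add: g_def genus_def)
  have phiW: "\<phi> (Wd p cc) = Sd g cc" for cc
    using phi unfolding Wd_def Sd_def g_def by blast
  have H0W: "H0 p = range (Wd p)" by (auto simp: H0_def Wd_def)
  have bij: "bij_betw \<phi> (H0 p) (sym_space (g - 1))"
    unfolding bij_betw_def
  proof
    show "inj_on \<phi> (H0 p)"
    proof (rule inj_onI)
      fix v w assume "v \<in> H0 p" "w \<in> H0 p" and e: "\<phi> v = \<phi> w"
      then obtain c1 c2 where v: "v = Wd p c1" and w: "w = Wd p c2" by (auto simp: H0W)
      have "Sd g c1 = Sd g c2" using e by (simp add: v w phiW)
      hence "\<forall>i<g. c1 i = c2 i"
      proof (intro allI impI)
        fix i assume "Sd g c1 = Sd g c2" "i < g"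
        hence "coeff (coeff (Sd g c1) i) (g - 1 - i) = coeff (coeff (Sd g c2) i) (g - 1 - i)" by simp
        with \<open>i < g\<close> show "c1 i = c2 i" by (simp add: Sd_coeff)
      qed
      thus "v = w" unfolding v w Wd_def g_def[symmetric] by (intro sum.cong) auto
    qed
  next
    show "\<phi> ` H0 p = sym_space (g - 1)"
    proof
      show "\<phi> ` H0 p \<subseteq> sym_space (g - 1)" using Sd_sym[of g] by (auto simp: H0W phiW)
    next
      show "sym_space (g - 1) \<subseteq> \<phi> ` H0 p"
      proof
        fix P :: "'k poly poly" assume P: "P \<in> sym_space (g - 1)"
        have "Sd g (\<lambda>i. coeff (ev P) i) = P"
        proof (rule poly_eqI)
          fix i show "coeff (Sd g (\<lambda>i. coeff (ev P) i)) i = coeff P i"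
            using g1 by (simp add: Sd_coeff sym_space_coeff[OF P]) linarith
        qed
        thus "P \<in> \<phi> ` H0 p" by (metis H0W phiW rangeI image_eqI)
      qed
    qed
  qed
  have equiv: "pullback_diff p (of_int a) (of_int b) (of_int c) (of_int d) 1 w \<in> H0 p \<and>
               \<phi> (pullback_diff p (of_int a) (of_int b) (of_int c) (of_int d) 1 w)
                 = sym_act (of_int a) (of_int b) (of_int c) (of_int d) (\<phi> w)"
    if sl: "SL2_Fp p a b c d" and w: "w \<in> H0 p" for a b c d w
  proof -
    obtain cc where wc: "w = Wd p cc" using w by (auto simp: H0W)
    have fr: "(of_int a :: 'k) ^ p = of_int a" "(of_int b :: 'k) ^ p = of_int b"
             "(of_int c :: 'k) ^ p = of_int c" "(of_int d :: 'k) ^ p = of_int d"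
      using sl by (auto simp: SL2_Fp_def intro!: frob_of_int[OF p ch])
    have "[a * d - b * c = 1] (mod int CHAR('k))" using sl ch by (simp add: SL2_Fp_def)
    hence "(of_int (a * d - b * c) :: 'k) = of_int 1" by (simp only: of_int_eq_iff_cong_CHAR)
    hence det: "(of_int a :: 'k) * of_int d - of_int b * of_int c = 1" by simp
    define c' where "c' = (\<lambda>j. coeff (N2 g (of_int a) (of_int b) (of_int c) (of_int d) cc) j)"
    have pb: "pullback_diff p (of_int a) (of_int b) (of_int c) (of_int d) 1 w = Wd p c'"
      unfolding wc c'_def g_def by (rule pullback_Wd[OF ac p p2 ch fr det])
    have "Sd g c' = sym_act (of_int a) (of_int b) (of_int c) (of_int d) (Sd g cc)"
    proof (rule ev_inj[OF Sd_sym sym_act_Sd_sym])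
      have "ev (Sd g c') = N2 g (of_int a) (of_int b) (of_int c) (of_int d) cc"
        unfolding ev_Sd c'_def using degree_N2[of g "of_int a" "of_int b" "of_int c" "of_int d" cc] g1 by (intro Npoly_coeff) linarith
      thus "ev (Sd g c') = ev (sym_act (of_int a) (of_int b) (of_int c) (of_int d) (Sd g cc))"
        by (simp add: ev_sym_act_Sd)
    qed
    thus ?thesis unfolding pb by (simp add: wc phiW H0W)
  qed
  show ?thesis using bij equiv unfolding g_def by blast
qed

end
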